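(* Fix an integer $\ell\ge2$ and a real $p\in(0,1)$, and let $X$ be the number of derangements of $G_{k,\ell}(m)$. Then, as $k\to\infty$, \[ \mathbb{E}[X]\sim (k!)^\ell\, p^{k\ell}\exp\left\{\frac{\ell}{2}\left(1-\frac1p\right)\right\}. \]
   Context: For integers $k\ge1$, $\ell\ge2$, $D_{k,\ell}$ is the digraph with vertex set $\{v_{i,j}: i\in[k], j\in[\ell]\}$ in which $(v_{i,j},v_{i',j'})$ is an arc if and only if $j'\equiv j+1 \pmod \ell$ (the blow-up of a directed $\ell$-cycle, each vertex replaced by $k$ vertices); it has $k^2\ell$ arcs. Given $p\in(0,1)$, let $m=\lfloor pk^2\ell\rfloor$ and let $G_{k,\ell}(m)$ be a spanning subgraph of $D_{k,\ell}$ (same vertex set) chosen uniformly at random among those with exactly $m$ arcs. A permutation in a digraph $G=(V,E)$ is a bijection $f:V\to V$ such that for every $v$ either $f(v)=v$ or $(v,f(v))\in E$; a derangement is a permutation fixing no vertex. Asymptotics are as $k\to\infty$ with $\ell,p$ fixed; $A\sim B$ means $A/B\to1$. *)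

theory Defs
  imports "HOL-Analysis.Analysis" "HOL-Library.Landau_Symbols"
begin

text \<open>Vertex v_{i,j} is encoded as the pair (i,j) with i < k, j < l (0-based indices).\<close>

definition blowup_vertices :: "nat \<Rightarrow> nat \<Rightarrow> (nat \<times> nat) set" where
  "blowup_vertices k l = {..<k} \<times> {..<l}"

definition blowup_arcs :: "nat \<Rightarrow> nat \<Rightarrow> ((nat \<times> nat) \<times> (nat \<times> nat)) set" where
  "blowup_arcs k l = {(u, w). u \<in> blowup_vertices k l \<and> w \<in> blowup_vertices k l \<and>
                              snd w = (snd u + 1) mod l}"

text \<open>A permutation of the digraph (V,E): a bijection f of V with f v = v or (v, f v) an arc.
  Functions are taken extensional on V so that they are counted exactly once.\<close>
definition digraph_permutations :: "'a set \<Rightarrow> ('a \<times> 'a) set \<Rightarrow> ('a \<Rightarrow> 'a) set" where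
  "digraph_permutations V E = {f \<in> extensional V. bij_betw f V V \<and>
                                  (\<forall>v\<in>V. f v = v \<or> (v, f v) \<in> E)}"

definition digraph_derangements :: "'a set \<Rightarrow> ('a \<times> 'a) set \<Rightarrow> ('a \<Rightarrow> 'a) set" where
  "digraph_derangements V E = {f \<in> digraph_permutations V E. \<forall>v\<in>V. f v \<noteq> v}"

definition num_arcs :: "real \<Rightarrow> nat \<Rightarrow> nat \<Rightarrow> nat" where
  "num_arcs p k l = nat \<lfloor>p * real (k^2 * l)\<rfloor>"

text \<open>Expected number of derangements of G_{k,l}(m): the average over all spanning subgraphs
  of D_{k,l} with exactly m arcs (uniform distribution).\<close>
definition expected_derangements :: "nat \<Rightarrow> nat \<Rightarrow> nat \<Rightarrow> real" where
  "expected_derangements k l m =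
     (\<Sum>E\<in>{E. E \<subseteq> blowup_arcs k l \<and> card E = m}.
         real (card (digraph_derangements (blowup_vertices k l) E)))
     / real (card {E. E \<subseteq> blowup_arcs k l \<and> card E = m})"

end

theory Submission
  imports Defs "HOL-Combinatorics.Permutations" "HOL-Real_Asymp.Real_Asymp"
begin


lemma mod_suc_inj:
  assumes "j < l" "j' < l" "(j + 1) mod l = (j' + 1) mod (l::nat)"
  shows "j = j'"
proof -
  have a: "(j + 1) mod l = (if j + 1 = l then 0 else j + 1)" using assms(1) by auto
  have b: "(j' + 1) mod l = (if j' + 1 = l then 0 else j' + 1)" using assms(2) by auto
  show ?thesis using a b assms by (auto split: if_splits)
qed

lemma mod_suc_neq:
  assumes "j < l" "2 \<le> (l::nat)"
  shows "(j + 1) mod l \<noteq> j"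
proof -
  have a: "(j + 1) mod l = (if j + 1 = l then 0 else j + 1)" using assms(1) by auto
  show ?thesis using a assms by (auto split: if_splits)
qed

definition Dset :: "nat \<Rightarrow> nat \<Rightarrow> ((nat \<times> nat) \<Rightarrow> (nat \<times> nat)) set" where
  "Dset k l = {f \<in> extensional (blowup_vertices k l). bij_betw f (blowup_vertices k l) (blowup_vertices k l)
      \<and> (\<forall>v\<in>blowup_vertices k l. snd (f v) = (snd v + 1) mod l)}"

lemma card_V: "card (blowup_vertices k l) = k * l"
  by (simp add: blowup_vertices_def card_cartesian_product)

lemma finite_V: "finite (blowup_vertices k l)"
  by (simp add: blowup_vertices_def)

lemma card_A: assumes "l > 0" shows "card (blowup_arcs k l) = k * k * l"
proof -
  let ?V = "blowup_vertices k l"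
  let ?g = "\<lambda>(u::nat\<times>nat, i::nat). (u, (i, (snd u + 1) mod l))"
  have "blowup_arcs k l = ?g ` (?V \<times> {..<k})"
  proof (rule set_eqI, rule iffI)
    fix x assume "x \<in> blowup_arcs k l"
    then obtain u w where x: "x = (u,w)" "u \<in> ?V" "w \<in> ?V" "snd w = (snd u + 1) mod l"
      by (auto simp: blowup_arcs_def)
    then have "x = ?g (u, fst w)" by (cases w) auto
    moreover have "(u, fst w) \<in> ?V \<times> {..<k}" using x by (auto simp: blowup_vertices_def)
    ultimately show "x \<in> ?g ` (?V \<times> {..<k})" by blast
  next
    fix x assume "x \<in> ?g ` (?V \<times> {..<k})"
    then show "x \<in> blowup_arcs k l" using assms
      by (auto simp: blowup_arcs_def blowup_vertices_def)
  qed
  moreover have "inj_on ?g (?V \<times> {..<k})" by (auto simp: inj_on_def)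
  ultimately have "card (blowup_arcs k l) = card (?V \<times> {..<k})" by (simp add: card_image)
  also have "\<dots> = k * l * k" by (simp add: card_cartesian_product card_V finite_V)
  finally show ?thesis by simp
qed

lemma finite_A: "finite (blowup_arcs k l)"
proof -
  have "blowup_arcs k l \<subseteq> blowup_vertices k l \<times> blowup_vertices k l"
    by (auto simp: blowup_arcs_def)
  then show ?thesis using finite_V finite_subset by blast
qed

lemma der_char:
  assumes "E \<subseteq> blowup_arcs k l" "l \<ge> 2"
  shows "digraph_derangements (blowup_vertices k l) E =
         {f \<in> Dset k l. (\<lambda>v. (v, f v)) ` blowup_vertices k l \<subseteq> E}"
proof (rule set_eqI, rule iffI)
  fix f assume f: "f \<in> digraph_derangements (blowup_vertices k l) E"
  then have arcs: "\<forall>v\<in>blowup_vertices k l. (v, f v) \<in> E"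
    by (auto simp: digraph_derangements_def digraph_permutations_def)
  then have "\<forall>v\<in>blowup_vertices k l. snd (f v) = (snd v + 1) mod l"
    using assms(1) by (auto simp: blowup_arcs_def)
  with f arcs show "f \<in> {f \<in> Dset k l. (\<lambda>v. (v, f v)) ` blowup_vertices k l \<subseteq> E}"
    by (auto simp: digraph_derangements_def digraph_permutations_def Dset_def)
next
  fix f assume f: "f \<in> {f \<in> Dset k l. (\<lambda>v. (v, f v)) ` blowup_vertices k l \<subseteq> E}"
  have "\<forall>v\<in>blowup_vertices k l. f v \<noteq> v"
  proof
    fix v assume v: "v \<in> blowup_vertices k l"
    then have "snd (f v) = (snd v + 1) mod l" using f by (auto simp: Dset_def)
    moreover have "snd v < l" using v by (auto simp: blowup_vertices_def)
    ultimately show "f v \<noteq> v" using mod_suc_neq[OF _ assms(2)] by metis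
  qed
  with f show "f \<in> digraph_derangements (blowup_vertices k l) E"
    by (auto simp: digraph_derangements_def digraph_permutations_def Dset_def)
qed

definition Phi :: "nat \<Rightarrow> nat \<Rightarrow> (nat \<Rightarrow> nat \<Rightarrow> nat) \<Rightarrow> (nat \<times> nat \<Rightarrow> nat \<times> nat)" where
  "Phi k l g = (\<lambda>v. if v \<in> blowup_vertices k l then (g (snd v) (fst v), (snd v + 1) mod l) else undefined)"

definition Psi :: "nat \<Rightarrow> nat \<Rightarrow> (nat \<times> nat \<Rightarrow> nat \<times> nat) \<Rightarrow> (nat \<Rightarrow> nat \<Rightarrow> nat)" where
  "Psi k l f = (\<lambda>j. if j < l then (\<lambda>i. if i < k then fst (f (i, j)) else i) else undefined)"

lemma card_Dset:
  assumes "l > 0"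
  shows "card (Dset k l) = fact k ^ l"
proof -
  let ?V = "blowup_vertices k l"
  let ?P = "PiE {..<l} (\<lambda>_. {p. p permutes {..<k}})"
  have cP: "card ?P = fact k ^ l"
    by (simp add: card_PiE card_permutations)
  have "bij_betw (Phi k l) ?P (Dset k l)"
  proof (rule bij_betw_byWitness[where f' = "Psi k l"])
    show "\<forall>g\<in>?P. Psi k l (Phi k l g) = g"
    proof
      fix g assume g: "g \<in> ?P"
      show "Psi k l (Phi k l g) = g"
      proof
        fix j
        show "Psi k l (Phi k l g) j = g j"
        proof (cases "j < l")
          case True
          then have pj: "g j permutes {..<k}" using g by auto
          show ?thesis
          proof
            fix i show "Psi k l (Phi k l g) j i = g j i"
              using True pj permutes_not_in[OF pj, of i]
              by (auto simp: Psi_def Phi_def blowup_vertices_def)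
          qed
        next
          case False
          then show ?thesis using g by (auto simp: Psi_def PiE_def extensional_def)
        qed
      qed
    qed
    show "\<forall>f\<in>Dset k l. Phi k l (Psi k l f) = f"
    proof
      fix f assume f: "f \<in> Dset k l"
      show "Phi k l (Psi k l f) = f"
      proof
        fix v
        show "Phi k l (Psi k l f) v = f v"
        proof (cases "v \<in> ?V")
          case True
          then have "snd (f v) = (snd v + 1) mod l" using f by (auto simp: Dset_def)
          moreover obtain a b where vab: "v = (a,b)" by (cases v)
          ultimately show ?thesis using True
            by (auto simp: Psi_def Phi_def blowup_vertices_def prod_eq_iff)
        next
          case False
          have "f \<in> extensional ?V" using f by (simp add: Dset_def)
          then have "f v = undefined" using False by (rule extensional_arb)
          then show ?thesis using False by (simp add: Phi_def)
        qed
      qed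
    qed
    show "Phi k l ` ?P \<subseteq> Dset k l"
    proof
      fix h assume "h \<in> Phi k l ` ?P"
      then obtain g where g: "g \<in> ?P" and h: "h = Phi k l g" by blast
      have perm: "\<And>j. j < l \<Longrightarrow> g j permutes {..<k}" using g by auto
      have into: "h ` ?V \<subseteq> ?V"
      proof
        fix x assume "x \<in> h ` ?V"
        then obtain v where v: "v \<in> ?V" "x = h v" by blast
        have "snd v < l" "fst v < k" using v by (auto simp: blowup_vertices_def)
        then have "g (snd v) (fst v) < k" using permutes_in_image[OF perm] by auto
        then show "x \<in> ?V" using v assms by (auto simp: h Phi_def blowup_vertices_def)
      qed
      have inj: "inj_on h ?V"
      proof (rule inj_onI)
        fix u v assume u: "u \<in> ?V" and v: "v \<in> ?V" and e: "h u = h v"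
        have ul: "snd u < l" "fst u < k" "snd v < l" "fst v < k" using u v by (auto simp: blowup_vertices_def)
        from e u v have e1: "(snd u + 1) mod l = (snd v + 1) mod l" and
          e2: "g (snd u) (fst u) = g (snd v) (fst v)" by (auto simp: h Phi_def)
        have sj: "snd u = snd v" using mod_suc_inj[OF ul(1) ul(3) e1] .
        then have "fst u = fst v" using e2 permutes_inj[OF perm[OF ul(1)]] by (auto dest: injD)
        with sj show "u = v" by (simp add: prod_eq_iff)
      qed
      have "h ` ?V = ?V" using endo_inj_surj[OF finite_V into inj] .
      then have "bij_betw h ?V ?V" using inj by (simp add: bij_betw_def)
      moreover have "h \<in> extensional ?V" by (simp add: h Phi_def extensional_def)
      moreover have "\<forall>v\<in>?V. snd (h v) = (snd v + 1) mod l" by (simp add: h Phi_def)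
      ultimately show "h \<in> Dset k l" by (simp add: Dset_def)
    qed
    show "Psi k l ` Dset k l \<subseteq> ?P"
    proof
      fix g assume "g \<in> Psi k l ` Dset k l"
      then obtain f where f: "f \<in> Dset k l" and g: "g = Psi k l f" by blast
      have bf: "bij_betw f ?V ?V" and sf: "\<forall>v\<in>?V. snd (f v) = (snd v + 1) mod l"
        using f by (auto simp: Dset_def)
      have "g j permutes {..<k}" if j: "j < l" for j
      proof (rule bij_imp_permutes)
        let ?h = "\<lambda>i. fst (f (i, j))"
        have into: "?h ` {..<k} \<subseteq> {..<k}"
        proof
          fix x assume "x \<in> ?h ` {..<k}"
          then obtain i where i: "i < k" "x = ?h i" by auto
          then have "(i,j) \<in> ?V" using j by (auto simp: blowup_vertices_def)
          then have "f (i,j) \<in> ?V" using bf bij_betwE by blast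
          then show "x \<in> {..<k}" using i by (auto simp: blowup_vertices_def)
        qed
        have inj: "inj_on ?h {..<k}"
        proof (rule inj_onI)
          fix a b assume a: "a \<in> {..<k}" and b: "b \<in> {..<k}" and e: "?h a = ?h b"
          have va: "(a,j) \<in> ?V" and vb: "(b,j) \<in> ?V" using a b j by (auto simp: blowup_vertices_def)
          have "snd (f (a,j)) = snd (f (b,j))" using sf va vb by auto
          with e have "f (a,j) = f (b,j)" by (simp add: prod_eq_iff)
          then have "(a,j) = (b,j)" using bf va vb by (auto simp: bij_betw_def dest: inj_onD)
          then show "a = b" by simp
        qed
        have "bij_betw ?h {..<k} {..<k}"
          using endo_inj_surj[OF _ into inj] inj by (simp add: bij_betw_def)
        then show "bij_betw (g j) {..<k} {..<k}"
          by (rule bij_betw_cong[THEN iffD1, rotated]) (simp add: g Psi_def j)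
        show "\<And>x. x \<notin> {..<k} \<Longrightarrow> g j x = x" by (simp add: g Psi_def j)
      qed
      moreover have "g \<in> extensional {..<l}" by (simp add: g Psi_def extensional_def)
      ultimately show "g \<in> ?P" by (auto simp: PiE_def)
    qed
  qed
  then have "card (Dset k l) = card ?P" by (simp add: bij_betw_same_card)
  with cP show ?thesis by simp
qed

lemma sup_count:
  assumes "finite A" "T \<subseteq> A" "card T = n" "n \<le> m"
  shows "card {E. E \<subseteq> A \<and> card E = m \<and> T \<subseteq> E} = (card A - n) choose (m - n)"
proof -
  have fT: "finite T" using assms finite_subset by blast
  have "bij_betw (\<lambda>E. E - T) {E. E \<subseteq> A \<and> card E = m \<and> T \<subseteq> E} {B. B \<subseteq> A - T \<and> card B = m - n}"
  proof (rule bij_betw_byWitness[where f' = "\<lambda>B. B \<union> T"])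
    show "\<forall>E\<in>{E. E \<subseteq> A \<and> card E = m \<and> T \<subseteq> E}. E - T \<union> T = E" by auto
    show "\<forall>B\<in>{B. B \<subseteq> A - T \<and> card B = m - n}. B \<union> T - T = B" by auto
    show "(\<lambda>E. E - T) ` {E. E \<subseteq> A \<and> card E = m \<and> T \<subseteq> E} \<subseteq> {B. B \<subseteq> A - T \<and> card B = m - n}"
    proof
      fix B assume "B \<in> (\<lambda>E. E - T) ` {E. E \<subseteq> A \<and> card E = m \<and> T \<subseteq> E}"
      then obtain E where E: "E \<subseteq> A" "card E = m" "T \<subseteq> E" "B = E - T" by blast
      have "card B = m - n" using E assms(3) fT by (simp add: card_Diff_subset)
      then show "B \<in> {B. B \<subseteq> A - T \<and> card B = m - n}" using E by auto
    qed
    show "(\<lambda>B. B \<union> T) ` {B. B \<subseteq> A - T \<and> card B = m - n} \<subseteq> {E. E \<subseteq> A \<and> card E = m \<and> T \<subseteq> E}"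
    proof
      fix E assume "E \<in> (\<lambda>B. B \<union> T) ` {B. B \<subseteq> A - T \<and> card B = m - n}"
      then obtain B where B: "B \<subseteq> A - T" "card B = m - n" "E = B \<union> T" by blast
      have fB: "finite B" using B assms(1) finite_subset by blast
      have "card E = card B + card T" using card_Un_disjoint[OF fB fT] B by auto
      then have "card E = m" using B assms by simp
      then show "E \<in> {E. E \<subseteq> A \<and> card E = m \<and> T \<subseteq> E}" using B assms by auto
    qed
  qed
  then have "card {E. E \<subseteq> A \<and> card E = m \<and> T \<subseteq> E} = card {B. B \<subseteq> A - T \<and> card B = m - n}"
    by (rule bij_betw_same_card)
  also have "\<dots> = card (A - T) choose (m - n)" using assms(1) by (simp add: n_subsets)
  also have "card (A - T) = card A - n" using assms fT by (simp add: card_Diff_subset)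
  finally show ?thesis .
qed

lemma finite_Dset: assumes "l > 0" shows "finite (Dset k l)"
  using card_Dset[OF assms, of k] by (metis card.infinite fact_nonzero power_not_zero)

lemma sum_der:
  assumes "l \<ge> 2" "k * l \<le> m"
  shows "(\<Sum>E\<in>{E. E \<subseteq> blowup_arcs k l \<and> card E = m}.
            card (digraph_derangements (blowup_vertices k l) E))
         = fact k ^ l * ((card (blowup_arcs k l) - k * l) choose (m - k * l))"
proof -
  let ?A = "blowup_arcs k l" and ?V = "blowup_vertices k l"
  let ?S = "{E. E \<subseteq> ?A \<and> card E = m}"
  let ?T = "\<lambda>f. (\<lambda>v. (v, f v)) ` ?V"
  have fS: "finite ?S" using finite_A by (simp add: finite_subset[of _ "Pow ?A"] finite_Collect_subsets)
  have fD: "finite (Dset k l)" using finite_Dset assms by simp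
  have "(\<Sum>E\<in>?S. card (digraph_derangements ?V E)) = (\<Sum>E\<in>?S. card {f \<in> Dset k l. ?T f \<subseteq> E})"
    using der_char assms(1) by (intro sum.cong) auto
  also have "\<dots> = (\<Sum>E\<in>?S. \<Sum>f\<in>{f \<in> Dset k l. ?T f \<subseteq> E}. 1)" by simp
  also have "\<dots> = (\<Sum>f\<in>Dset k l. \<Sum>E\<in>{E \<in> ?S. ?T f \<subseteq> E}. 1)"
    by (rule sum.swap_restrict[OF fS fD])
  also have "\<dots> = (\<Sum>f\<in>Dset k l. (card ?A - k * l) choose (m - k * l))"
  proof (rule sum.cong[OF refl])
    fix f assume f: "f \<in> Dset k l"
    have bf: "bij_betw f ?V ?V" and sf: "\<forall>v\<in>?V. snd (f v) = (snd v + 1) mod l"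
      using f by (auto simp: Dset_def)
    have sub: "?T f \<subseteq> ?A"
    proof
      fix x assume "x \<in> ?T f"
      then obtain v where v: "v \<in> ?V" "x = (v, f v)" by blast
      have "f v \<in> ?V" using bf v bij_betwE by blast
      then show "x \<in> ?A" using v sf by (auto simp: blowup_arcs_def)
    qed
    have "card (?T f) = card ?V" by (rule card_image) (auto simp: inj_on_def)
    then have cT: "card (?T f) = k * l" by (simp add: card_V)
    have "(\<Sum>E\<in>{E \<in> ?S. ?T f \<subseteq> E}. 1) = card {E. E \<subseteq> ?A \<and> card E = m \<and> ?T f \<subseteq> E}"
      by (simp add: conj_assoc)
    also have "\<dots> = (card ?A - k * l) choose (m - k * l)"
      by (rule sup_count[OF finite_A sub cT assms(2)])
    finally show "(\<Sum>E\<in>{E \<in> ?S. ?T f \<subseteq> E}. 1) = (card ?A - k * l) choose (m - k * l)" .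
  qed
  also have "\<dots> = fact k ^ l * ((card ?A - k * l) choose (m - k * l))"
    using card_Dset assms by simp
  finally show ?thesis .
qed

lemma expected_formula:
  assumes "l \<ge> 2" "k * l \<le> m"
  shows "expected_derangements k l m =
     real (fact k ^ l * ((k * k * l - k * l) choose (m - k * l))) / real ((k * k * l) choose m)"
proof -
  let ?S = "{E. E \<subseteq> blowup_arcs k l \<and> card E = m}"
  have cA: "card (blowup_arcs k l) = k * k * l" using card_A assms(1) by simp
  have c1: "card ?S = (k * k * l) choose m"
    using n_subsets[OF finite_A, of k l m] unfolding cA .
  have c2: "(\<Sum>E\<in>?S. real (card (digraph_derangements (blowup_vertices k l) E)))
      = real (\<Sum>E\<in>?S. card (digraph_derangements (blowup_vertices k l) E))"
    by (simp only: of_nat_sum)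
  have c3: "(\<Sum>E\<in>?S. card (digraph_derangements (blowup_vertices k l) E))
      = fact k ^ l * ((k * k * l - k * l) choose (m - k * l))"
    using sum_der[OF assms] unfolding cA .
  show ?thesis unfolding expected_derangements_def c2 c3 c1 ..
qed



lemma gauss_real: "(\<Sum>i<n. real i) = real n * (real n - 1) / 2"
  by (induction n) (auto simp: field_simps)

lemma lin_sum: "(\<Sum>i<n. - (a + b * real i) - c) = - (real n * a + b * (real n * (real n - 1) / 2)) - real n * (c::real)"
proof -
  have "(\<Sum>i<n. - (a + b * real i) - c) = - (real n * a + b * (\<Sum>i<n. real i)) - real n * c"
    by (simp add: sum_subtractf sum_negf sum.distrib sum_distrib_left)
  then show ?thesis by (simp only: gauss_real)
qed

lemma term_bounds:
  fixes p Nr th V :: real and n i :: nat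
  assumes p: "0 < p" "p < 1" and th: "0 \<le> th" "th < 1" and nN: "real n < Nr"
    and V: "V = (1 + (1 - p) * real n) / (p * (Nr - real n))" "V \<le> 1/2" and i: "i < n"
  shows "ln ((p * Nr - th - real i) / (p * (Nr - real i)))
           \<le> - ((1 - p) / (p * Nr) * real i)"
    and "- (1 / (p * (Nr - real n)) + (1 - p) / (p * (Nr - real n)) * real i) - 2 * V^2
           \<le> ln ((p * Nr - th - real i) / (p * (Nr - real i)))"
proof -
  define y where "y = (th + (1 - p) * real i) / (p * (Nr - real i))"
  have iN: "real i < Nr" using i nN by linarith
  have pos1: "0 < p * (Nr - real i)" using p iN by simp
  have pos2: "0 < p * (Nr - real n)" using p nN by simp
  have ne: "p * (Nr - real i) \<noteq> 0" using p iN by simp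
  have e1: "p * Nr - th - real i = p * (Nr - real i) - (th + (1 - p) * real i)" by (simp add: algebra_simps)
  have t: "(p * Nr - th - real i) / (p * (Nr - real i)) = 1 - y"
    unfolding y_def e1 using ne by (simp add: diff_divide_distrib)
  have y0: "0 \<le> y" unfolding y_def using p th pos1 by (intro divide_nonneg_pos) auto
  have ylow: "(1 - p) / (p * Nr) * real i \<le> y"
  proof -
    have "(1 - p) / (p * Nr) * real i = ((1 - p) * real i) / (p * Nr)" by simp
    also have "\<dots> \<le> (th + (1 - p) * real i) / (p * Nr)"
      using th p iN by (intro divide_right_mono) auto
    also have "\<dots> \<le> (th + (1 - p) * real i) / (p * (Nr - real i))"
      using th p pos1 iN by (intro divide_left_mono) (auto intro!: mult_pos_pos)
    finally show ?thesis unfolding y_def .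
  qed
  have yup: "y \<le> (1 + (1 - p) * real i) / (p * (Nr - real n))"
  proof -
    have "y \<le> (1 + (1 - p) * real i) / (p * (Nr - real i))"
      unfolding y_def using th pos1 by (intro divide_right_mono) auto
    also have "\<dots> \<le> (1 + (1 - p) * real i) / (p * (Nr - real n))"
      using p pos2 pos1 i iN nN by (intro divide_left_mono mult_left_mono mult_pos_pos) auto
    finally show ?thesis .
  qed
  have yV: "y \<le> V"
  proof -
    have "(1 + (1 - p) * real i) / (p * (Nr - real n)) \<le> V"
      unfolding V(1) using p pos2 i by (intro divide_right_mono) auto
    with yup show ?thesis by linarith
  qed
  have y12: "y \<le> 1/2" using yV V by linarith
  show "ln ((p * Nr - th - real i) / (p * (Nr - real i))) \<le> - ((1 - p) / (p * Nr) * real i)"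
  proof -
    have "ln (1 - y) \<le> (1 - y) - 1" using y12 by (intro ln_le_minus_one) auto
    then show ?thesis unfolding t using ylow by linarith
  qed
  show "- (1 / (p * (Nr - real n)) + (1 - p) / (p * (Nr - real n)) * real i) - 2 * V^2
           \<le> ln ((p * Nr - th - real i) / (p * (Nr - real i)))"
  proof -
    have l: "- y - 2 * y^2 \<le> ln (1 - y)" using y0 y12 by (rule ln_one_minus_pos_lower_bound)
    have "y^2 \<le> V^2" using y0 yV by (intro power_mono) auto
    moreover have "y \<le> 1 / (p * (Nr - real n)) + (1 - p) / (p * (Nr - real n)) * real i"
      using yup by (simp add: add_divide_distrib)
    ultimately show ?thesis unfolding t using l by linarith
  qed
qed

lemma sum_bounds:
  fixes p Nr th V :: real and n :: nat
  assumes p: "0 < p" "p < 1" and th: "0 \<le> th" "th < 1" and nN: "real n < Nr"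
    and V: "V = (1 + (1 - p) * real n) / (p * (Nr - real n))" "V \<le> 1/2"
  shows "(\<Sum>i<n. ln ((p * Nr - th - real i) / (p * (Nr - real i))))
           \<le> - ((1 - p) / (p * Nr) * (real n * (real n - 1) / 2))"
    and "- (real n / (p * (Nr - real n)) + (1 - p) / (p * (Nr - real n)) * (real n * (real n - 1) / 2))
           - real n * (2 * V^2)
           \<le> (\<Sum>i<n. ln ((p * Nr - th - real i) / (p * (Nr - real i))))"
proof -
  have "(\<Sum>i<n. ln ((p * Nr - th - real i) / (p * (Nr - real i))))
        \<le> (\<Sum>i<n. - ((1 - p) / (p * Nr) * real i))"
    using term_bounds(1)[OF assms] by (intro sum_mono) auto
  also have "\<dots> = - ((1 - p) / (p * Nr) * (real n * (real n - 1) / 2))"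
    by (simp only: sum_negf sum_distrib_left[symmetric] gauss_real)
  finally show "(\<Sum>i<n. ln ((p * Nr - th - real i) / (p * (Nr - real i))))
           \<le> - ((1 - p) / (p * Nr) * (real n * (real n - 1) / 2))" .
  have "(\<Sum>i<n. - (1 / (p * (Nr - real n)) + (1 - p) / (p * (Nr - real n)) * real i) - 2 * V^2)
        \<le> (\<Sum>i<n. ln ((p * Nr - th - real i) / (p * (Nr - real i))))"
    using term_bounds(2)[OF assms] by (intro sum_mono) auto
  moreover have "(\<Sum>i<n. - (1 / (p * (Nr - real n)) + (1 - p) / (p * (Nr - real n)) * real i) - 2 * V^2)
     = - (real n / (p * (Nr - real n)) + (1 - p) / (p * (Nr - real n)) * (real n * (real n - 1) / 2))
           - real n * (2 * V^2)"
    by (simp only: lin_sum) simp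
  ultimately show "- (real n / (p * (Nr - real n)) + (1 - p) / (p * (Nr - real n)) * (real n * (real n - 1) / 2))
           - real n * (2 * V^2)
           \<le> (\<Sum>i<n. ln ((p * Nr - th - real i) / (p * (Nr - real i))))" by simp
qed



lemma lims:
  fixes p :: real and l :: nat
  assumes "0 < p" "p < 1" "l \<ge> 2"
  shows "((\<lambda>k::nat. (1 - p) / (p * (real k * real k * real l)) * (real k * real l * (real k * real l - 1) / 2))
           \<longlongrightarrow> (1 - p) * real l / (2 * p)) sequentially"
    and "((\<lambda>k::nat. real k * real l / (p * (real k * real k * real l - real k * real l))
           + (1 - p) / (p * (real k * real k * real l - real k * real l)) * (real k * real l * (real k * real l - 1) / 2))
           \<longlongrightarrow> (1 - p) * real l / (2 * p)) sequentially"
    and "((\<lambda>k::nat. (1 + (1 - p) * (real k * real l)) / (p * (real k * real k * real l - real k * real l)))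
           \<longlongrightarrow> 0) sequentially"
    and "((\<lambda>k::nat. real k * real l * (2 * ((1 + (1 - p) * (real k * real l)) / (p * (real k * real k * real l - real k * real l)))^2))
           \<longlongrightarrow> 0) sequentially"
proof -
  have l: "real l \<noteq> 0" "p \<noteq> 0" using assms by auto
  show "((\<lambda>k::nat. (1 - p) / (p * (real k * real k * real l)) * (real k * real l * (real k * real l - 1) / 2))
           \<longlongrightarrow> (1 - p) * real l / (2 * p)) sequentially"
    using assms l by (real_asymp simp: field_simps)
  show "((\<lambda>k::nat. real k * real l / (p * (real k * real k * real l - real k * real l))
           + (1 - p) / (p * (real k * real k * real l - real k * real l)) * (real k * real l * (real k * real l - 1) / 2))
           \<longlongrightarrow> (1 - p) * real l / (2 * p)) sequentially"
    using assms l by (real_asymp simp: field_simps)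
  show "((\<lambda>k::nat. (1 + (1 - p) * (real k * real l)) / (p * (real k * real k * real l - real k * real l)))
           \<longlongrightarrow> 0) sequentially"
    using assms l by (real_asymp simp: field_simps)
  show "((\<lambda>k::nat. real k * real l * (2 * ((1 + (1 - p) * (real k * real l)) / (p * (real k * real k * real l - real k * real l)))^2))
           \<longlongrightarrow> 0) sequentially"
    using assms l by (real_asymp simp: field_simps)
qed



lemma fact_prod: "n \<le> m \<Longrightarrow> (fact m :: real) = fact (m - n) * (\<Prod>i<n. real m - real i)"
proof (induction n)
  case 0 then show ?case by simp
next
  case (Suc n)
  then have "(fact m :: real) = fact (m - n) * (\<Prod>i<n. real m - real i)" by simp
  moreover have "m - n = Suc (m - Suc n)" using Suc.prems by simp
  moreover have "real (m - n) = real m - real n" using Suc.prems by simp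
  ultimately show ?case using Suc.prems by (simp add: algebra_simps)
qed

lemma choose_ratio:
  assumes "n \<le> m" "m \<le> N"
  shows "real ((N - n) choose (m - n)) / real (N choose m) = (\<Prod>i<n. (real m - real i) / (real N - real i))"
proof -
  have b1: "real ((N - n) choose (m - n)) = fact (N - n) / (fact (m - n) * fact (N - m))"
    using assms by (subst binomial_fact) auto
  have b2: "real (N choose m) = fact N / (fact m * fact (N - m))"
    using assms by (subst binomial_fact) auto
  have fm: "(fact m :: real) = fact (m - n) * (\<Prod>i<n. real m - real i)" using fact_prod[of n m] assms by simp
  have fN: "(fact N :: real) = fact (N - n) * (\<Prod>i<n. real N - real i)" using fact_prod[of n N] assms by simp
  have pN: "(\<Prod>i<n. real N - real i) \<noteq> 0"
    using assms by (subst prod_zero_iff) auto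
  have "real ((N - n) choose (m - n)) / real (N choose m)
        = (fact (N - n) / (fact (m - n) * fact (N - m))) / ((fact (N - n) * (\<Prod>i<n. real N - real i)) / ((fact (m - n) * (\<Prod>i<n. real m - real i)) * fact (N - m)))"
    unfolding b1 b2 fm[symmetric] fN[symmetric] ..
  also have "\<dots> = (\<Prod>i<n. real m - real i) / (\<Prod>i<n. real N - real i)"
    using pN by (simp add: field_simps)
  also have "\<dots> = (\<Prod>i<n. (real m - real i) / (real N - real i))"
    by (simp add: prod_dividef)
  finally show ?thesis .
qed

lemma prod_limit:
  fixes p :: real and l :: nat
  assumes l: "l \<ge> 2" and p: "0 < p" "p < 1"
  shows "((\<lambda>k. \<Prod>i<k * l. (real (nat \<lfloor>p * real (k^2 * l)\<rfloor>) - real i) / (p * (real (k * k * l) - real i)))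
          \<longlongrightarrow> exp (real l / 2 * (1 - 1 / p))) sequentially"
proof -
  define Nr where "Nr k = real k * real k * real l" for k :: nat
  define V where "V k = (1 + (1 - p) * (real k * real l)) / (p * (real k * real k * real l - real k * real l))" for k :: nat
  define th where "th k = p * Nr k - of_int \<lfloor>p * Nr k\<rfloor>" for k :: nat
  define t where "t k i = (real (nat \<lfloor>p * real (k^2 * l)\<rfloor>) - real i) / (p * (real (k * k * l) - real i))" for k i :: nat
  define F where "F k = (\<Sum>i<k * l. ln (t k i))" for k
  define lo where "lo k = - (real k * real l / (p * (real k * real k * real l - real k * real l))
           + (1 - p) / (p * (real k * real k * real l - real k * real l)) * (real k * real l * (real k * real l - 1) / 2))
           - real k * real l * (2 * V k ^ 2)" for k :: nat
  define up where "up k = - ((1 - p) / (p * (real k * real k * real l)) * (real k * real l * (real k * real l - 1) / 2))" for k :: nat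
  have LV: "V \<longlonglongrightarrow> 0" unfolding V_def using lims(3)[OF p l] .
  have ev1: "eventually (\<lambda>k. V k \<le> 1/2) sequentially"
    using order_tendstoD(2)[OF LV, of "1/2"] by (auto elim: eventually_mono)
  obtain K :: nat where K: "1 / p < real K" using reals_Archimedean2 by blast
  have ev2: "eventually (\<lambda>k. 2 \<le> k \<and> K \<le> k) sequentially"
    by (rule eventually_sequentiallyI[of "max 2 K"]) auto
  have evs: "eventually (\<lambda>k. lo k \<le> F k \<and> F k \<le> up k \<and> (\<Prod>i<k * l. t k i) = exp (F k)) sequentially"
    using ev1 ev2
  proof eventually_elim
    case (elim k)
    have k2: "2 \<le> k" and kK: "K \<le> k" and Vk: "V k \<le> 1/2" using elim by auto
    have NrR: "real (k^2 * l) = Nr k" "real (k * k * l) = Nr k" by (simp_all add: Nr_def power2_eq_square)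
    have lpos: "real l > 0" using l by simp
    have nN: "real (k * l) < Nr k"
    proof -
      have "real k * real l * 1 < real k * real l * real k" using k2 lpos by (intro mult_strict_left_mono) auto
      then show ?thesis by (simp add: Nr_def algebra_simps)
    qed
    have fl: "of_int \<lfloor>p * Nr k\<rfloor> \<le> p * Nr k" "p * Nr k < of_int \<lfloor>p * Nr k\<rfloor> + 1"
      by (simp_all add: of_int_floor_le)
    have th0: "0 \<le> th k" "th k < 1" using fl unfolding th_def by linarith+
    have pN0: "0 \<le> p * Nr k" using p by (simp add: Nr_def)
    have mR: "real (nat \<lfloor>p * real (k^2 * l)\<rfloor>) = p * Nr k - th k"
      unfolding NrR th_def using pN0 by simp
    have pk: "1 \<le> p * real k"
    proof -
      have "1 / p < real k" using K kK by (meson less_le_trans of_nat_le_iff)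
      then show ?thesis using p by (simp add: field_simps)
    qed
    have nm: "real (k * l) \<le> p * Nr k - th k"
    proof -
      have "real (k * l) * 1 \<le> real (k * l) * (p * real k)" using pk by (intro mult_left_mono) auto
      then have "real (k * l) \<le> p * Nr k" by (simp add: Nr_def algebra_simps)
      then have "int (k * l) \<le> \<lfloor>p * Nr k\<rfloor>" by (simp add: le_floor_iff)
      then have "real (k * l) \<le> of_int \<lfloor>p * Nr k\<rfloor>" by linarith
      then show ?thesis unfolding th_def by simp
    qed
    have tform: "t k i = (p * Nr k - th k - real i) / (p * (Nr k - real i))" for i
      unfolding t_def mR NrR(2) ..
    have tpos: "0 < t k i" if "i < k * l" for i
    proof -
      have "real i < real (k * l)" using that by (simp only: of_nat_less_iff)
      then show ?thesis unfolding tform using nm nN p by (intro divide_pos_pos mult_pos_pos) auto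
    qed
    have Vk': "V k = (1 + (1 - p) * real (k * l)) / (p * (Nr k - real (k * l)))"
      by (simp add: V_def Nr_def)
    note sb = sum_bounds[OF p th0 nN Vk' Vk]
    have Fk: "F k = (\<Sum>i<k * l. ln ((p * Nr k - th k - real i) / (p * (Nr k - real i))))"
      unfolding F_def tform ..
    have "lo k \<le> F k" using sb(2) unfolding Fk lo_def by (simp add: Nr_def)
    moreover have "F k \<le> up k" using sb(1) unfolding Fk up_def by (simp add: Nr_def)
    moreover have "(\<Prod>i<k * l. t k i) = exp (F k)"
      unfolding F_def exp_sum[OF finite_lessThan] using tpos by (intro prod.cong) auto
    ultimately show ?case by simp
  qed
  have c: "- ((1 - p) * real l / (2 * p)) = real l / 2 * (1 - 1 / p)"
    using p by (simp add: field_simps)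
  have Lup: "up \<longlonglongrightarrow> - ((1 - p) * real l / (2 * p))"
    unfolding up_def by (intro tendsto_minus lims(1)[OF p l])
  have Llo: "lo \<longlonglongrightarrow> - ((1 - p) * real l / (2 * p)) - 0"
    unfolding lo_def V_def by (intro tendsto_diff tendsto_minus lims(2)[OF p l] lims(4)[OF p l])
  have LF: "F \<longlonglongrightarrow> - ((1 - p) * real l / (2 * p))"
    by (rule tendsto_sandwich[OF _ _ Llo[simplified] Lup]) (use evs in \<open>auto elim: eventually_mono\<close>)
  have "(\<lambda>k. exp (F k)) \<longlonglongrightarrow> exp (real l / 2 * (1 - 1 / p))"
    using tendsto_exp[OF LF] unfolding c .
  then have "(\<lambda>k. \<Prod>i<k * l. t k i) \<longlonglongrightarrow> exp (real l / 2 * (1 - 1 / p))"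
    by (rule Lim_transform_eventually) (use evs in \<open>auto elim: eventually_mono\<close>)
  then show ?thesis unfolding t_def .
qed

lemma ev_m:
  fixes p :: real and l :: nat
  assumes p: "0 < p" "p < 1"
  shows "eventually (\<lambda>k. k * l \<le> nat \<lfloor>p * real (k^2 * l)\<rfloor> \<and> nat \<lfloor>p * real (k^2 * l)\<rfloor> \<le> k * k * l) sequentially"
proof -
  obtain K :: nat where K: "1 / p < real K" using reals_Archimedean2 by blast
  show ?thesis
  proof (rule eventually_sequentiallyI[of K])
    fix k assume kK: "K \<le> k"
    have pk: "1 \<le> p * real k"
    proof -
      have "1 / p < real k" using K kK by (meson less_le_trans of_nat_le_iff)
      then show ?thesis using p by (simp add: field_simps)
    qed
    have "real (k * l) * 1 \<le> real (k * l) * (p * real k)" using pk by (intro mult_left_mono) auto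
    then have "real (k * l) \<le> p * real (k^2 * l)" by (simp add: power2_eq_square algebra_simps)
    then have "int (k * l) \<le> \<lfloor>p * real (k^2 * l)\<rfloor>" by (simp add: le_floor_iff)
    then have a: "k * l \<le> nat \<lfloor>p * real (k^2 * l)\<rfloor>" by linarith
    have "p * real (k^2 * l) \<le> real (k^2 * l)" using p by (intro mult_left_le_one_le) auto
    then have "\<lfloor>p * real (k^2 * l)\<rfloor> \<le> int (k^2 * l)" by (simp add: floor_le_iff)
    then have b: "nat \<lfloor>p * real (k^2 * l)\<rfloor> \<le> k * k * l" by (simp add: power2_eq_square nat_le_iff)
    show "k * l \<le> nat \<lfloor>p * real (k^2 * l)\<rfloor> \<and> nat \<lfloor>p * real (k^2 * l)\<rfloor> \<le> k * k * l"
      using a b by simp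
  qed
qed

theorem mainTheorem5:
  fixes l :: nat and p :: real
  assumes "l \<ge> 2" and "0 < p" and "p < 1"
  shows "(\<lambda>k. expected_derangements k l (num_arcs p k l)) \<sim>[at_top]
         (\<lambda>k. (fact k) ^ l * p ^ (k * l) * exp (real l / 2 * (1 - 1 / p)))"
proof (rule asymp_equivI')
  define c where "c = exp (real l / 2 * (1 - 1 / p))"
  have cpos: "c > 0" by (simp add: c_def)
  let ?T = "\<lambda>k. \<Prod>i<k * l. (real (nat \<lfloor>p * real (k^2 * l)\<rfloor>) - real i) / (p * (real (k * k * l) - real i))"
  have L: "(\<lambda>k. ?T k / c) \<longlonglongrightarrow> c / c"
    by (intro tendsto_divide prod_limit[OF assms, folded c_def] tendsto_const) (use cpos in simp)
  have ev: "eventually (\<lambda>k. ?T k / c = expected_derangements k l (num_arcs p k l) /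
        ((fact k) ^ l * p ^ (k * l) * exp (real l / 2 * (1 - 1 / p)))) sequentially"
    using ev_m[OF assms(2,3), of l]
  proof eventually_elim
    case (elim k)
    let ?m = "nat \<lfloor>p * real (k^2 * l)\<rfloor>"
    have e1: "expected_derangements k l ?m =
       real (fact k ^ l * ((k * k * l - k * l) choose (?m - k * l))) / real ((k * k * l) choose ?m)"
      using expected_formula[OF assms(1)] elim by simp
    have r: "real ((k * k * l - k * l) choose (?m - k * l)) / real ((k * k * l) choose ?m)
       = (\<Prod>i<k * l. (real ?m - real i) / (real (k * k * l) - real i))"
      using choose_ratio elim by simp
    have T: "?T k = (\<Prod>i<k * l. (real ?m - real i) / (real (k * k * l) - real i)) / p ^ (k * l)"
    proof -
      have "?T k = (\<Prod>i<k * l. ((real ?m - real i) / (real (k * k * l) - real i)) / p)"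
        by (intro prod.cong) (auto simp: field_simps)
      also have "\<dots> = (\<Prod>i<k * l. (real ?m - real i) / (real (k * k * l) - real i)) / (\<Prod>i<k * l. p)"
        by (rule prod_dividef)
      finally show ?thesis by simp
    qed
    have "expected_derangements k l ?m = fact k ^ l * (\<Prod>i<k * l. (real ?m - real i) / (real (k * k * l) - real i))"
      unfolding e1 r[symmetric] by simp
    then show ?case unfolding T num_arcs_def c_def[symmetric]
      using assms(2) by (simp add: field_simps)
  qed
  show "((\<lambda>k. expected_derangements k l (num_arcs p k l) /
        ((fact k) ^ l * p ^ (k * l) * exp (real l / 2 * (1 - 1 / p)))) \<longlongrightarrow> 1) at_top"
    using Lim_transform_eventually[OF L ev] cpos by simp
qed


end
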